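(* Let $d\ge 3$ and for $x,y,z\in\mathbb S^{d-1}$ let $V(x,y,z)$ be the volume of the parallelepiped spanned by the vectors $x,y,z$, so that $V^2(x,y,z)=1-\langle y,z\rangle^2-\langle x,z\rangle^2-\langle x,y\rangle^2+2\langle y,z\rangle\langle x,z\rangle\langle x,y\rangle$. Then every isotropic probability measure on $\mathbb S^{d-1}$ maximizes $I_{V^2}(\mu)=\iiint V^2(x,y,z)\,d\mu(x)d\mu(y)d\mu(z)$ over $\mu\in\mathcal P(\mathbb S^{d-1})$.
   Context: $\mathbb S^{d-1}$ is the unit sphere in $\mathbb R^d$ and $\mathcal P(\mathbb S^{d-1})$ the set of Borel probability measures on it. $\mu$ is isotropic if $\int xx^T\,d\mu(x)=\frac1d I_d$. *)

theory Defs
  imports "HOL-Probability.Probability"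
begin

definition V2 :: "real^'n \<Rightarrow> real^'n \<Rightarrow> real^'n \<Rightarrow> real" where
  "V2 x y z = 1 - (y \<bullet> z)\<^sup>2 - (x \<bullet> z)\<^sup>2 - (x \<bullet> y)\<^sup>2
              + 2 * (y \<bullet> z) * (x \<bullet> z) * (x \<bullet> y)"

definition sphere_prob :: "(real^'n) measure \<Rightarrow> bool" where
  "sphere_prob M \<longleftrightarrow> prob_space M \<and> sets M = sets borel \<and> emeasure M (sphere 0 1) = 1"

definition isotropic :: "(real^'n) measure \<Rightarrow> bool" where
  "isotropic M \<longleftrightarrow> (\<forall>i j. (\<integral>x. x$i * x$j \<partial>M) = (if i = j then 1 / real CARD('n) else 0))"

definition I_V2 :: "(real^'n) measure \<Rightarrow> real" where
  "I_V2 M = (\<integral>x. (\<integral>y. (\<integral>z. V2 x y z \<partial>M) \<partial>M) \<partial>M)"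

end

theory Submission
  imports Defs
begin

definition Bm :: "(real^'n) measure \<Rightarrow> 'n \<Rightarrow> 'n \<Rightarrow> real" where
  "Bm M i j = (\<integral>x. x$i * x$j \<partial>M)"

lemma sp_space: "sphere_prob M \<Longrightarrow> space M = UNIV"
  unfolding sphere_prob_def by (metis sets_eq_imp_space_eq space_borel)

lemma sp_AE: assumes "sphere_prob M" shows "AE x in M. norm x = 1"
proof -
  interpret prob_space M using assms unfolding sphere_prob_def by auto
  have "{x \<in> space M. norm x = 1} = sphere 0 1" using sp_space[OF assms] by auto
  then show ?thesis
    using assms unfolding sphere_prob_def
    by (intro AE_I_eq_1) auto
qed

lemma sp_meas: "sphere_prob M \<Longrightarrow> f \<in> borel_measurable borel \<Longrightarrow> f \<in> borel_measurable M"
  unfolding sphere_prob_def by (metis measurable_cong_sets)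

lemma sp_int_comp: assumes "sphere_prob M"
  shows "integrable M (\<lambda>x. x$i * x$j)"
proof -
  interpret prob_space M using assms unfolding sphere_prob_def by auto
  show ?thesis
  proof (rule integrable_const_bound[where B=1])
    show "AE x in M. norm (x$i * x$j) \<le> 1"
      using sp_AE[OF assms]
    proof eventually_elim
      case (elim x)
      have "\<bar>x$i\<bar> \<le> 1" "\<bar>x$j\<bar> \<le> 1" using component_le_norm_cart[of x] elim by auto
      then show ?case by (simp add: abs_mult mult_le_one)
    qed
    show "(\<lambda>x. x$i * x$j) \<in> borel_measurable M"
      by (rule sp_meas[OF assms]) measurable
  qed
qed

lemma sp_int_quad: assumes "sphere_prob M"
  shows "integrable M (\<lambda>z. K + (\<Sum>i\<in>UNIV. \<Sum>j\<in>UNIV. c i j * (z$i * z$j)))"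
proof -
  interpret prob_space M using assms unfolding sphere_prob_def by auto
  show ?thesis using sp_int_comp[OF assms] by auto
qed

lemma sp_integral_quad: assumes "sphere_prob M"
  shows "(\<integral>z. K + (\<Sum>i\<in>UNIV. \<Sum>j\<in>UNIV. c i j * (z$i * z$j)) \<partial>M)
     = K + (\<Sum>i\<in>UNIV. \<Sum>j\<in>UNIV. c i j * Bm M i j)"
proof -
  interpret prob_space M using assms unfolding sphere_prob_def by auto
  show ?thesis using sp_int_comp[OF assms]
    by (simp add: Bm_def integral_add integral_sum prob_space)
qed


lemma inner_prod_sum: "(a \<bullet> z) * (b \<bullet> z) = (\<Sum>i\<in>UNIV. \<Sum>j\<in>UNIV. a$i*b$j*(z$i*z$j))"
  for a b z :: "real^'n"
  by (simp add: inner_vec_def sum_product algebra_simps)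

lemma comb3: "(\<Sum>i\<in>A. \<Sum>j\<in>B. (- P i j - Q i j + w * R i j) * e i j)
  = - (\<Sum>i\<in>A. \<Sum>j\<in>B. P i j * e i j) - (\<Sum>i\<in>A. \<Sum>j\<in>B. Q i j * e i j)
    + w * (\<Sum>i\<in>A. \<Sum>j\<in>B. R i j * e i j)" for w :: real
  by (simp add: algebra_simps sum.distrib sum_subtractf sum_distrib_left sum_negf)

lemma V2_expand: "V2 x y z = (1 - (x \<bullet> y)\<^sup>2) +
  (\<Sum>i\<in>UNIV. \<Sum>j\<in>UNIV. (- (y$i*y$j) - x$i*x$j + (2*(x \<bullet> y))*(y$i*x$j)) * (z$i*z$j))"
proof -
  have "V2 x y z = 1 - (y \<bullet> z)*(y \<bullet> z) - (x \<bullet> z)*(x \<bullet> z) - (x \<bullet> y)\<^sup>2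
              + 2 * (x \<bullet> y) * ((y \<bullet> z) * (x \<bullet> z))"
    unfolding V2_def by (simp add: power2_eq_square algebra_simps)
  also have "\<dots> = (1 - (x \<bullet> y)\<^sup>2) +
  (\<Sum>i\<in>UNIV. \<Sum>j\<in>UNIV. (- (y$i*y$j) - x$i*x$j + (2*(x \<bullet> y))*(y$i*x$j)) * (z$i*z$j))"
    unfolding comb3 inner_prod_sum by (simp add: algebra_simps)
  finally show ?thesis .
qed

lemma step2: fixes x y :: "real^'n" and B :: "'n \<Rightarrow> 'n \<Rightarrow> real"
  shows "(1 - (x \<bullet> y)\<^sup>2) +
  (\<Sum>i\<in>UNIV. \<Sum>j\<in>UNIV. (- (y$i*y$j) - x$i*x$j + (2*(x \<bullet> y))*(y$i*x$j)) * B i j)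
  = (1 - (\<Sum>i\<in>UNIV. \<Sum>j\<in>UNIV. x$i*x$j * B i j)) +
  (\<Sum>i\<in>UNIV. \<Sum>j\<in>UNIV. (- (x$i*x$j) - B i j + 2 * (x$i * (\<Sum>k\<in>UNIV. B j k * x$k))) * (y$i*y$j))"
proof -
  have e: "(x \<bullet> y) * (\<Sum>i\<in>UNIV. \<Sum>j\<in>UNIV. (y$i*x$j) * B i j)
     = (\<Sum>i\<in>UNIV. \<Sum>j\<in>UNIV. (x$i * (\<Sum>k\<in>UNIV. B j k * x$k)) * (y$i*y$j))"
  proof -
    have "(x \<bullet> y) * (\<Sum>i\<in>UNIV. \<Sum>j\<in>UNIV. (y$i*x$j) * B i j)
      = (\<Sum>k\<in>UNIV. x$k * y$k * (\<Sum>i\<in>UNIV. \<Sum>j\<in>UNIV. (y$i*x$j) * B i j))"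
      by (simp add: inner_vec_def sum_distrib_right)
    also have "\<dots> = (\<Sum>k\<in>UNIV. \<Sum>i\<in>UNIV. \<Sum>j\<in>UNIV. x$k * B i j * x$j * (y$k * y$i))"
      by (simp add: sum_distrib_left mult_ac)
    also have "\<dots> = (\<Sum>i\<in>UNIV. \<Sum>j\<in>UNIV. (x$i * (\<Sum>k\<in>UNIV. B j k * x$k)) * (y$i*y$j))"
      by (simp add: sum_distrib_left sum_distrib_right mult_ac)
    finally show ?thesis .
  qed
  have e2: "(x \<bullet> y)\<^sup>2 = (\<Sum>i\<in>UNIV. \<Sum>j\<in>UNIV. x$i*x$j*(y$i*y$j))"
    using inner_prod_sum[of x y x] by (simp add: power2_eq_square)
  show ?thesis
    unfolding comb3 e[symmetric] e2 by (simp add: algebra_simps)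
qed

lemma step3: fixes x :: "real^'n" and B :: "'n \<Rightarrow> 'n \<Rightarrow> real"
  shows "(1 - (\<Sum>i\<in>UNIV. \<Sum>j\<in>UNIV. x$i*x$j * B i j)) +
  (\<Sum>i\<in>UNIV. \<Sum>j\<in>UNIV. (- (x$i*x$j) - B i j + 2 * (x$i * (\<Sum>k\<in>UNIV. B j k * x$k))) * B i j)
  = (1 - (\<Sum>i\<in>UNIV. \<Sum>j\<in>UNIV. B i j * B i j)) +
  (\<Sum>i\<in>UNIV. \<Sum>j\<in>UNIV. (- B i j - B i j + 2 * (\<Sum>k\<in>UNIV. B i k * B k j)) * (x$i*x$j))"
proof -
  have e: "(\<Sum>i\<in>UNIV. \<Sum>j\<in>UNIV. (x$i * (\<Sum>k\<in>UNIV. B j k * x$k)) * B i j)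
     = (\<Sum>i\<in>UNIV. \<Sum>j\<in>UNIV. (\<Sum>k\<in>UNIV. B i k * B k j) * (x$i*x$j))"
  proof -
    have "(\<Sum>i\<in>UNIV. \<Sum>j\<in>UNIV. (x$i * (\<Sum>k\<in>UNIV. B j k * x$k)) * B i j)
       = (\<Sum>i\<in>UNIV. \<Sum>j\<in>UNIV. \<Sum>k\<in>UNIV. B i j * B j k * (x$i * x$k))"
      by (simp add: sum_distrib_left sum_distrib_right mult_ac)
    also have "\<dots> = (\<Sum>i\<in>UNIV. \<Sum>k\<in>UNIV. \<Sum>j\<in>UNIV. B i j * B j k * (x$i * x$k))"
      by (rule sum.cong[OF refl], rule sum.swap)
    also have "\<dots> = (\<Sum>i\<in>UNIV. \<Sum>j\<in>UNIV. (\<Sum>k\<in>UNIV. B i k * B k j) * (x$i*x$j))"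
      by (simp add: sum_distrib_right)
    finally show ?thesis .
  qed
  have c: "(\<Sum>i\<in>UNIV. \<Sum>j\<in>UNIV. (- (x$i*x$j) - B i j + 2 * (x$i * (\<Sum>k\<in>UNIV. B j k * x$k))) * B i j)
    = - (\<Sum>i\<in>UNIV. \<Sum>j\<in>UNIV. x$i*x$j * B i j) - (\<Sum>i\<in>UNIV. \<Sum>j\<in>UNIV. B i j * B i j)
      + 2 * (\<Sum>i\<in>UNIV. \<Sum>j\<in>UNIV. (x$i * (\<Sum>k\<in>UNIV. B j k * x$k)) * B i j)"
    by (rule comb3)
  have c2: "(\<Sum>i\<in>UNIV. \<Sum>j\<in>UNIV. (- B i j - B i j + 2 * (\<Sum>k\<in>UNIV. B i k * B k j)) * (x$i*x$j))
    = - (\<Sum>i\<in>UNIV. \<Sum>j\<in>UNIV. B i j * (x$i*x$j)) - (\<Sum>i\<in>UNIV. \<Sum>j\<in>UNIV. B i j * (x$i*x$j))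
      + 2 * (\<Sum>i\<in>UNIV. \<Sum>j\<in>UNIV. (\<Sum>k\<in>UNIV. B i k * B k j) * (x$i*x$j))"
    by (rule comb3)
  show ?thesis unfolding c c2 e by (simp add: algebra_simps)
qed

lemma step4: fixes B :: "'n \<Rightarrow> 'n \<Rightarrow> real"
  shows "(1 - (\<Sum>i\<in>UNIV. \<Sum>j\<in>UNIV. B i j * B i j)) +
  (\<Sum>i\<in>UNIV. \<Sum>j\<in>UNIV. (- B i j - B i j + 2 * (\<Sum>k\<in>UNIV. B i k * B k j)) * B i j)
  = 1 - 3 * (\<Sum>i\<in>UNIV. \<Sum>j\<in>UNIV. B i j * B i j) + 2 * (\<Sum>i\<in>UNIV. \<Sum>j\<in>UNIV. (\<Sum>k\<in>UNIV. B i k * B k j) * B i j)"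
  unfolding comb3 by simp



lemma delta_quad: fixes b :: "'n::finite \<Rightarrow> real"
  shows "(\<Sum>i\<in>UNIV. \<Sum>j\<in>UNIV. (b i - (if i = k then a else 0)) * (b j - (if j = k then a else 0)) * M i j)
   = (\<Sum>i\<in>UNIV. \<Sum>j\<in>UNIV. b i * b j * M i j) - a * (\<Sum>j\<in>UNIV. b j * M k j)
     - a * (\<Sum>i\<in>UNIV. b i * M i k) + a\<^sup>2 * M k k"
proof -
  have "\<And>i j. (b i - (if i = k then a else 0)) * (b j - (if j = k then a else 0)) * M i j
    = b i * b j * M i j - (if i = k then a * b j * M k j else 0) - (if j = k then a * b i * M i k else 0)
      + (if i = k then (if j = k then a\<^sup>2 * M k k else 0) else 0)"
    by (auto simp: algebra_simps power2_eq_square)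
  moreover have "(\<Sum>i\<in>UNIV. \<Sum>j\<in>UNIV. if i = k then g j else 0) = (\<Sum>j\<in>UNIV. g j)" for g :: "'n \<Rightarrow> real"
  proof -
    have "(\<Sum>i\<in>UNIV. \<Sum>j\<in>UNIV. if i = k then g j else 0) = (\<Sum>i\<in>UNIV. if i = k then (\<Sum>j\<in>UNIV. g j) else 0)"
      by (rule sum.cong) auto
    then show ?thesis by simp
  qed
  ultimately show ?thesis
    by (simp add: sum.distrib sum_subtractf sum_distrib_left mult_ac)
qed

lemma delta_sq: fixes b :: "'n::finite \<Rightarrow> real"
  shows "(\<Sum>i\<in>UNIV. (b i - (if i = k then a else 0))\<^sup>2) = (\<Sum>i\<in>UNIV. (b i)\<^sup>2) - 2 * a * b k + a\<^sup>2"
proof -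
  have "\<And>i. (b i - (if i = k then a else 0))\<^sup>2 = (b i)\<^sup>2 - (if i = k then 2 * a * b k - a\<^sup>2 else 0)"
    by (auto simp: algebra_simps power2_eq_square)
  then show ?thesis by (simp add: sum_subtractf)
qed

lemma CSQ: fixes B :: "'n::finite \<Rightarrow> 'n \<Rightarrow> real"
  shows "(\<Sum>i\<in>UNIV. \<Sum>j\<in>UNIV. u i * u j * B i j)\<^sup>2
     \<le> (\<Sum>i\<in>UNIV. \<Sum>j\<in>UNIV. B i j * B i j) * (\<Sum>i\<in>UNIV. (u i)\<^sup>2)\<^sup>2"
proof -
  have 1: "(\<Sum>i\<in>UNIV. \<Sum>j\<in>UNIV. u i * u j * B i j) = (\<Sum>p\<in>UNIV \<times> UNIV. B (fst p) (snd p) * (u (fst p) * u (snd p)))"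
    by (simp add: sum.cartesian_product case_prod_beta mult_ac)
  have 2: "(\<Sum>i\<in>UNIV. \<Sum>j\<in>UNIV. B i j * B i j) = (\<Sum>p\<in>UNIV \<times> UNIV. (B (fst p) (snd p))\<^sup>2)"
    by (simp add: sum.cartesian_product case_prod_beta power2_eq_square)
  have 3: "(\<Sum>i\<in>UNIV. (u i)\<^sup>2)\<^sup>2 = (\<Sum>p\<in>UNIV \<times> UNIV. (u (fst p) * u (snd p))\<^sup>2)"
    by (simp add: sum.cartesian_product case_prod_beta power2_eq_square sum_product mult_ac)
  show ?thesis unfolding 1 2 3 by (rule Cauchy_Schwarz_ineq_sum)
qed

lemma key_ineq:
  fixes B :: "'n::finite \<Rightarrow> 'n \<Rightarrow> real"
  assumes sym: "\<And>i j. B i j = B j i"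
    and psd: "\<And>u. 0 \<le> (\<Sum>i\<in>UNIV. \<Sum>j\<in>UNIV. u i * u j * B i j)"
    and le: "\<And>u. (\<Sum>i\<in>UNIV. \<Sum>j\<in>UNIV. u i * u j * B i j) \<le> (\<Sum>i\<in>UNIV. (u i)\<^sup>2)"
    and tr: "(\<Sum>i\<in>UNIV. B i i) = 1"
    and p2le: "(\<Sum>i\<in>UNIV. \<Sum>j\<in>UNIV. B i j * B i j) \<le> 1"
    and card: "CARD('n) \<ge> 3"
  shows "3 / real CARD('n) - 2 / (real CARD('n))\<^sup>2
     \<le> 3 * (\<Sum>i\<in>UNIV. \<Sum>j\<in>UNIV. B i j * B i j) - 2 * (\<Sum>i\<in>UNIV. \<Sum>j\<in>UNIV. (\<Sum>k\<in>UNIV. B i k * B k j) * B i j)"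
proof -
  define Q where "Q u = (\<Sum>i\<in>UNIV. \<Sum>j\<in>UNIV. u i * u j * B i j)" for u
  define p2 where "p2 = (\<Sum>i\<in>UNIV. \<Sum>j\<in>UNIV. B i j * B i j)"
  define p3 where "p3 = (\<Sum>i\<in>UNIV. \<Sum>j\<in>UNIV. (\<Sum>k\<in>UNIV. B i k * B k j) * B i j)"
  define d where "d = real CARD('n)"
  have d3: "d \<ge> 3" using card unfolding d_def by simp
  have p2nn: "0 \<le> p2" unfolding p2_def by (auto intro!: sum_nonneg)
  have Snn: "0 \<le> (\<Sum>i\<in>UNIV. (u i)\<^sup>2)" for u :: "'n \<Rightarrow> real" by (auto intro!: sum_nonneg)
  have Qb: "Q u \<le> sqrt p2 * (\<Sum>i\<in>UNIV. (u i)\<^sup>2)" for u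
  proof -
    have "(Q u)\<^sup>2 \<le> (sqrt p2 * (\<Sum>i\<in>UNIV. (u i)\<^sup>2))\<^sup>2"
      using CSQ[of u B] p2nn unfolding Q_def p2_def by (simp add: power_mult_distrib)
    moreover have "0 \<le> sqrt p2 * (\<Sum>i\<in>UNIV. (u i)\<^sup>2)" using p2nn Snn[of u] by simp
    ultimately show ?thesis by (rule power2_le_imp_le)
  qed
  have p3Q: "p3 = (\<Sum>k\<in>UNIV. Q (\<lambda>i. B i k))"
  proof -
    have "p3 = (\<Sum>i\<in>UNIV. \<Sum>j\<in>UNIV. \<Sum>k\<in>UNIV. B i k * B j k * B i j)"
    proof -
      have sw: "B i k * B k j * B i j = B i k * B j k * B i j" for i j k by (metis sym)
      show ?thesis unfolding p3_def by (simp add: sum_distrib_right sw)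
    qed
    also have "\<dots> = (\<Sum>i\<in>UNIV. \<Sum>k\<in>UNIV. \<Sum>j\<in>UNIV. B i k * B j k * B i j)"
      by (rule sum.cong[OF refl], rule sum.swap)
    also have "\<dots> = (\<Sum>k\<in>UNIV. \<Sum>i\<in>UNIV. \<Sum>j\<in>UNIV. B i k * B j k * B i j)"
      by (rule sum.swap)
    finally show ?thesis unfolding Q_def .
  qed
  have p2c: "p2 = (\<Sum>k\<in>UNIV. \<Sum>i\<in>UNIV. (B i k)\<^sup>2)"
    unfolding p2_def power2_eq_square by (rule sum.swap)
  have p3le: "p3 \<le> sqrt p2 * p2"
  proof -
    have "p3 \<le> (\<Sum>k\<in>UNIV. sqrt p2 * (\<Sum>i\<in>UNIV. (B i k)\<^sup>2))"
      unfolding p3Q by (rule sum_mono) (rule Qb)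
    also have "\<dots> = sqrt p2 * p2" unfolding p2c by (simp add: sum_distrib_left)
    finally show ?thesis .
  qed
  have rhs: "3 / d - 2 / d\<^sup>2 \<le> 7/9"
  proof -
    have t: "0 < 1/d" "1/d \<le> 1/3" using d3 by (auto simp: field_simps)
    have "0 \<le> (1/3 - 1/d) * (7/3 - 2 * (1/d))" using t by (intro mult_nonneg_nonneg; linarith)
    moreover have "(1/3 - 1/d) * (7/3 - 2 * (1/d)) = 7/9 - (3 / d - 2 / d\<^sup>2)"
      using d3 by (simp add: field_simps power2_eq_square)
    ultimately show ?thesis by linarith
  qed
  show ?thesis
  proof (cases "\<exists>u. Q u > 5/6 * (\<Sum>i\<in>UNIV. (u i)\<^sup>2)")
    case True
    then obtain u where u: "Q u > 5/6 * (\<Sum>i\<in>UNIV. (u i)\<^sup>2)" by blast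
    define S where "S = (\<Sum>i\<in>UNIV. (u i)\<^sup>2)"
    have "Q u \<le> S" unfolding S_def Q_def by (rule le)
    moreover have "0 \<le> S" unfolding S_def by (auto intro!: sum_nonneg)
    ultimately have Spos: "S > 0" using u unfolding S_def by linarith
    have "5/6 * S < sqrt p2 * S" using u Qb[of u] unfolding S_def by linarith
    then have s56: "5/6 < sqrt p2" using Spos by simp
    define s where "s = sqrt p2"
    have s1: "s \<le> 1" unfolding s_def using p2le unfolding p2_def by simp
    have p2s: "p2 = s\<^sup>2" unfolding s_def using p2nn by simp
    have "p3 \<le> s^3" using p3le p2s unfolding s_def[symmetric] by (simp add: power2_eq_square power3_eq_cube)
    have "0 \<le> (s - 5/6) * (-2 * s\<^sup>2 + 4/3 * s + 10/9)"
    proof (rule mult_nonneg_nonneg)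
      show "0 \<le> s - 5/6" using s56 s_def by simp
      have "0 \<le> (1 - s) * (s + 5/9)" using s1 s56 s_def by (intro mult_nonneg_nonneg) auto
      moreover have "-2 * s\<^sup>2 + 4/3 * s + 10/9 = 2 * ((1 - s) * (s + 5/9)) + 4/9 * s"
        by (simp add: field_simps power2_eq_square)
      ultimately show "0 \<le> -2 * s\<^sup>2 + 4/3 * s + 10/9" using s56 s_def by linarith
    qed
    moreover have "(s - 5/6) * (-2 * s\<^sup>2 + 4/3 * s + 10/9) = 3 * s\<^sup>2 - 2 * s^3 - 25/27"
      by (simp add: field_simps power2_eq_square power3_eq_cube)
    ultimately have "25/27 \<le> 3 * s\<^sup>2 - 2 * s^3" by linarith
    then have "25/27 \<le> 3 * p2 - 2 * p3" using \<open>p3 \<le> s^3\<close> p2s by linarith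
    then show ?thesis using rhs unfolding p2_def p3_def d_def by linarith
  next
    case False
    then have small: "Q u \<le> 5/6 * (\<Sum>i\<in>UNIV. (u i)\<^sup>2)" for u by (simp add: not_less)
    define a where "a = 1 / d"
    define r where "r = 3/2 - 2/d"
    have r56: "r \<ge> 5/6" unfolding r_def using d3 by (simp add: field_simps)
    define c where "c k = (\<lambda>i. B i k - (if i = k then a else 0))" for k
    have nn: "0 \<le> (\<Sum>k\<in>UNIV. r * (\<Sum>i\<in>UNIV. (c k i)\<^sup>2) - Q (c k))"
    proof (rule sum_nonneg)
      fix k
      have "Q (c k) \<le> 5/6 * (\<Sum>i\<in>UNIV. (c k i)\<^sup>2)" by (rule small)
      moreover have "5/6 * (\<Sum>i\<in>UNIV. (c k i)\<^sup>2) \<le> r * (\<Sum>i\<in>UNIV. (c k i)\<^sup>2)"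
        using r56 by (intro mult_right_mono) (auto intro!: sum_nonneg)
      ultimately show "0 \<le> r * (\<Sum>i\<in>UNIV. (c k i)\<^sup>2) - Q (c k)" by linarith
    qed
    have e1: "(\<Sum>k\<in>UNIV. (\<Sum>i\<in>UNIV. (c k i)\<^sup>2)) = p2 - 2 * a + a\<^sup>2 * d"
      unfolding c_def delta_sq p2c using tr unfolding d_def
      by (simp add: sum.distrib sum_subtractf sum_distrib_left[symmetric])
    have e2: "(\<Sum>k\<in>UNIV. Q (c k)) = p3 - 2 * a * p2 + a\<^sup>2"
    proof -
      have "(\<Sum>k\<in>UNIV. Q (c k)) = (\<Sum>k\<in>UNIV. Q (\<lambda>i. B i k) - a * (\<Sum>j\<in>UNIV. (B j k)\<^sup>2)
           - a * (\<Sum>i\<in>UNIV. (B i k)\<^sup>2) + a\<^sup>2 * B k k)"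
        proof -
          have sw: "(\<Sum>j\<in>UNIV. B j k * B k j) = (\<Sum>j\<in>UNIV. B j k * B j k)" for k
            by (rule sum.cong[OF refl]) (metis sym)
          show ?thesis unfolding Q_def c_def delta_quad by (simp add: sw power2_eq_square)
        qed
      also have "\<dots> = p3 - 2 * a * p2 + a\<^sup>2"
        unfolding p3Q p2c using tr
        by (simp add: sum.distrib sum_subtractf sum_distrib_left[symmetric])
      finally show ?thesis .
    qed
    have h0: "0 \<le> r * (p2 - 2 * a + a\<^sup>2 * d) - (p3 - 2 * a * p2 + a\<^sup>2)"
      using nn unfolding sum_subtractf sum_distrib_left[symmetric] e1 e2 .
    have ad: "a\<^sup>2 * d = a" using d3 by (simp add: a_def power2_eq_square)
    have eqA: "p2 - 2 * a + a\<^sup>2 * d = p2 - a" using ad by simp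
    have r_a: "r = 3/2 - 2*a" by (simp add: r_def a_def)
    have eqB: "r * (p2 - a) - (p3 - 2 * a * p2 + a\<^sup>2) = 3/2*p2 - p3 - 3/2*a + a\<^sup>2"
      unfolding r_a by (simp add: field_simps power2_eq_square)
    have eqC: "3 / d - 2 / d\<^sup>2 = 3 * a - 2 * a\<^sup>2"
      by (simp add: a_def power2_eq_square)
    have "0 \<le> 3/2*p2 - p3 - 3/2*a + a\<^sup>2" using h0 unfolding eqA eqB .
    then have "3 / d - 2 / d\<^sup>2 \<le> 3 * p2 - 2 * p3" unfolding eqC by linarith
    then show ?thesis unfolding p2_def p3_def d_def .
  qed
qed


lemma I_V2_formula: assumes "sphere_prob M"
  shows "I_V2 M = 1 - 3 * (\<Sum>i\<in>UNIV. \<Sum>j\<in>UNIV. Bm M i j * Bm M i j)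
     + 2 * (\<Sum>i\<in>UNIV. \<Sum>j\<in>UNIV. (\<Sum>k\<in>UNIV. Bm M i k * Bm M k j) * Bm M i j)"
proof -
  have z: "(\<integral>z. V2 x y z \<partial>M) = (1 - (\<Sum>i\<in>UNIV. \<Sum>j\<in>UNIV. x$i*x$j * Bm M i j)) +
  (\<Sum>i\<in>UNIV. \<Sum>j\<in>UNIV. (- (x$i*x$j) - Bm M i j + 2 * (x$i * (\<Sum>k\<in>UNIV. Bm M j k * x$k))) * (y$i*y$j))"
    for x y :: "real^'a"
  proof -
    have "(\<integral>z. V2 x y z \<partial>M) = (1 - (x \<bullet> y)\<^sup>2) +
      (\<Sum>i\<in>UNIV. \<Sum>j\<in>UNIV. (- (y$i*y$j) - x$i*x$j + (2*(x \<bullet> y))*(y$i*x$j)) * Bm M i j)"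
      by (simp only: V2_expand sp_integral_quad[OF assms])
    also note step2[of x y "Bm M"]
    finally show ?thesis .
  qed
  have y: "(\<integral>y. (\<integral>z. V2 x y z \<partial>M) \<partial>M) = (1 - (\<Sum>i\<in>UNIV. \<Sum>j\<in>UNIV. Bm M i j * Bm M i j)) +
  (\<Sum>i\<in>UNIV. \<Sum>j\<in>UNIV. (- Bm M i j - Bm M i j + 2 * (\<Sum>k\<in>UNIV. Bm M i k * Bm M k j)) * (x$i*x$j))"
    for x :: "real^'a"
    by (simp only: z sp_integral_quad[OF assms] step3)
  show ?thesis unfolding I_V2_def
    by (simp only: y sp_integral_quad[OF assms] step4)
qed

lemma Q_int: assumes "sphere_prob M"
  shows "(\<Sum>i\<in>UNIV. \<Sum>j\<in>UNIV. u i * u j * Bm M i j) = (\<integral>x. (\<Sum>i\<in>UNIV. u i * x$i)\<^sup>2 \<partial>M)"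
proof -
  have "(\<Sum>i\<in>UNIV. u i * x$i)\<^sup>2 = 0 + (\<Sum>i\<in>UNIV. \<Sum>j\<in>UNIV. (u i * u j) * (x$i * x$j))" for x :: "real^'a"
    by (simp add: power2_eq_square sum_product mult_ac)
  then have "(\<integral>x. (\<Sum>i\<in>UNIV. u i * x$i)\<^sup>2 \<partial>M) = 0 + (\<Sum>i\<in>UNIV. \<Sum>j\<in>UNIV. (u i * u j) * Bm M i j)"
    by (simp only: sp_integral_quad[OF assms])
  then show ?thesis by simp
qed

lemma sumsq_norm: "(\<Sum>i\<in>UNIV. (x$i)\<^sup>2) = (norm x)\<^sup>2" for x :: "real^'n"
  using power2_norm_eq_inner[of x] by (simp add: inner_vec_def power2_eq_square)

lemma meas_facts: assumes "sphere_prob M"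
  shows "\<And>i j. Bm M i j = Bm M j i"
    and "\<And>u. 0 \<le> (\<Sum>i\<in>UNIV. \<Sum>j\<in>UNIV. u i * u j * Bm M i j)"
    and "\<And>u. (\<Sum>i\<in>UNIV. \<Sum>j\<in>UNIV. u i * u j * Bm M i j) \<le> (\<Sum>i\<in>UNIV. (u i)\<^sup>2)"
    and "(\<Sum>i\<in>UNIV. Bm M i i) = 1"
    and "(\<Sum>i\<in>UNIV. \<Sum>j\<in>UNIV. Bm M i j * Bm M i j) \<le> 1"
proof -
  interpret prob_space M using assms unfolding sphere_prob_def by auto
  show "Bm M i j = Bm M j i" for i j by (simp add: Bm_def mult.commute)
  show "0 \<le> (\<Sum>i\<in>UNIV. \<Sum>j\<in>UNIV. u i * u j * Bm M i j)" for u
    unfolding Q_int[OF assms] by (rule integral_nonneg_AE) simp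
  have intq: "integrable M (\<lambda>x. (\<Sum>i\<in>UNIV. u i * x$i)\<^sup>2)" for u
  proof -
    have "(\<lambda>x::real^'a. (\<Sum>i\<in>UNIV. u i * x$i)\<^sup>2) = (\<lambda>x. 0 + (\<Sum>i\<in>UNIV. \<Sum>j\<in>UNIV. (u i * u j) * (x$i * x$j)))"
      by (simp add: power2_eq_square sum_product mult_ac)
    then show ?thesis using sp_int_quad[OF assms, of 0 "\<lambda>i j. u i * u j"] by simp
  qed
  have tr: "(\<integral>x. (\<Sum>i\<in>UNIV. (x$i)\<^sup>2) \<partial>M) = 1"
  proof -
    have "(\<integral>x. (\<Sum>i\<in>UNIV. (x$i)\<^sup>2) \<partial>M) = (\<integral>x. 1 \<partial>M)"
    proof (rule integral_cong_AE)
      show "(\<lambda>x::real^'a. \<Sum>i\<in>UNIV. (x$i)\<^sup>2) \<in> borel_measurable M"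
        by (rule sp_meas[OF assms]) measurable
      show "AE x in M. (\<Sum>i\<in>UNIV. (x$i)\<^sup>2) = 1"
        using sp_AE[OF assms] by eventually_elim (simp add: sumsq_norm)
    qed simp
    then show ?thesis by (simp add: prob_space)
  qed
  have intsq: "integrable M (\<lambda>x. (\<Sum>i\<in>UNIV. (x$i)\<^sup>2))"
    using sp_int_comp[OF assms] by (simp add: power2_eq_square)
  show le: "(\<Sum>i\<in>UNIV. \<Sum>j\<in>UNIV. u i * u j * Bm M i j) \<le> (\<Sum>i\<in>UNIV. (u i)\<^sup>2)" for u
  proof -
    have "(\<integral>x. (\<Sum>i\<in>UNIV. u i * x$i)\<^sup>2 \<partial>M) \<le> (\<integral>x. (\<Sum>i\<in>UNIV. (u i)\<^sup>2) \<partial>M)"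
    proof (rule integral_mono_AE)
      show "integrable M (\<lambda>x. (\<Sum>i\<in>UNIV. u i * x$i)\<^sup>2)" by (rule intq)
      show "integrable M (\<lambda>x. (\<Sum>i\<in>UNIV. (u i)\<^sup>2))" by simp
      show "AE x in M. (\<Sum>i\<in>UNIV. u i * x$i)\<^sup>2 \<le> (\<Sum>i\<in>UNIV. (u i)\<^sup>2)"
        using sp_AE[OF assms]
      proof eventually_elim
        case (elim x)
        have "(\<Sum>i\<in>UNIV. u i * x$i)\<^sup>2 \<le> (\<Sum>i\<in>UNIV. (u i)\<^sup>2) * (\<Sum>i\<in>UNIV. (x$i)\<^sup>2)"
          by (rule Cauchy_Schwarz_ineq_sum)
        then show ?case using elim by (simp add: sumsq_norm)
      qed
    qed
    then show ?thesis unfolding Q_int[OF assms] by (simp add: prob_space)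
  qed
  have trB: "(\<Sum>i\<in>UNIV. Bm M i i) = (\<integral>x. (\<Sum>i\<in>UNIV. (x$i)\<^sup>2) \<partial>M)"
    unfolding Bm_def power2_eq_square
    using sp_int_comp[OF assms] by (simp add: integral_sum)
  show "(\<Sum>i\<in>UNIV. Bm M i i) = 1" using trB tr by simp
  show "(\<Sum>i\<in>UNIV. \<Sum>j\<in>UNIV. Bm M i j * Bm M i j) \<le> 1"
  proof -
    have e: "(\<integral>x. 0 + (\<Sum>i\<in>UNIV. \<Sum>j\<in>UNIV. Bm M i j * (x$i * x$j)) \<partial>M)
        = 0 + (\<Sum>i\<in>UNIV. \<Sum>j\<in>UNIV. Bm M i j * Bm M i j)"
      by (rule sp_integral_quad[OF assms])
    have "(\<integral>x. 0 + (\<Sum>i\<in>UNIV. \<Sum>j\<in>UNIV. Bm M i j * (x$i * x$j)) \<partial>M) \<le> (\<integral>x. (\<Sum>i\<in>UNIV. (x$i)\<^sup>2) \<partial>M)"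
    proof (rule integral_mono)
      show "integrable M (\<lambda>x. 0 + (\<Sum>i\<in>UNIV. \<Sum>j\<in>UNIV. Bm M i j * (x$i * x$j)))"
        by (rule sp_int_quad[OF assms])
      show "integrable M (\<lambda>x. (\<Sum>i\<in>UNIV. (x$i)\<^sup>2))" by (rule intsq)
      fix x :: "real^'a"
      have "(\<Sum>i\<in>UNIV. \<Sum>j\<in>UNIV. (\<lambda>i. x$i) i * (\<lambda>i. x$i) j * Bm M i j) \<le> (\<Sum>i\<in>UNIV. ((\<lambda>i. x$i) i)\<^sup>2)"
        by (rule le)
      then show "0 + (\<Sum>i\<in>UNIV. \<Sum>j\<in>UNIV. Bm M i j * (x$i * x$j)) \<le> (\<Sum>i\<in>UNIV. (x$i)\<^sup>2)"
        by (simp add: mult_ac)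
    qed
    then show ?thesis using e tr by simp
  qed
qed

theorem theorem4p3:
  fixes \<mu> :: "(real^'n) measure"
  assumes "CARD('n) \<ge> 3"
    and "sphere_prob \<mu>"
    and "isotropic \<mu>"
  shows "\<forall>\<nu> :: (real^'n) measure. sphere_prob \<nu> \<longrightarrow> I_V2 \<nu> \<le> I_V2 \<mu>"
proof (intro allI impI)
  fix \<nu> :: "(real^'n) measure"
  assume nu: "sphere_prob \<nu>"
  define d where "d = real CARD('n)"
  have dpos: "d > 0" unfolding d_def by simp
  have Bmu: "Bm \<mu> i j = (if i = j then 1 / d else 0)" for i j
    using assms(3) unfolding isotropic_def Bm_def d_def by simp
  have p2mu: "(\<Sum>i\<in>UNIV. \<Sum>j\<in>UNIV. Bm \<mu> i j * Bm \<mu> i j) = 1 / d"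
    using dpos by (simp add: Bmu d_def[symmetric] power2_eq_square if_distrib[of "\<lambda>x. x * _"] cong: if_cong)
  have dk: "(\<Sum>k\<in>UNIV. (if i = k then a else 0) * (if k = j then a else 0)) = (if i = j then a*a else 0)"
    for i j :: 'n and a :: real
  proof -
    have "(\<Sum>k\<in>UNIV. (if i = k then a else 0) * (if k = j then a else 0))
       = (\<Sum>k\<in>UNIV. if k = i then (if i = j then a*a else 0) else 0)"
      by (rule sum.cong) auto
    then show ?thesis by simp
  qed
  have p3mu: "(\<Sum>i\<in>UNIV. \<Sum>j\<in>UNIV. (\<Sum>k\<in>UNIV. Bm \<mu> i k * Bm \<mu> k j) * Bm \<mu> i j) = 1 / d\<^sup>2"
  proof -
    have "(\<Sum>i\<in>UNIV. \<Sum>j\<in>UNIV. (\<Sum>k\<in>UNIV. Bm \<mu> i k * Bm \<mu> k j) * Bm \<mu> i j)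
      = (\<Sum>i\<in>UNIV. \<Sum>j\<in>UNIV. (if (i::'n) = j then 1/d * (1/d) else 0) * (if i = j then 1 / d else 0))"
      by (simp only: Bmu dk)
    also have "\<dots> = (\<Sum>i\<in>UNIV. \<Sum>j\<in>UNIV. if j = (i::'n) then 1/d * (1/d) * (1/d) else 0)"
      by (intro sum.cong) auto
    also have "\<dots> = d * (1/d * (1/d) * (1/d))" by (simp add: d_def)
    also have "\<dots> = 1 / d\<^sup>2" using dpos by (simp add: field_simps power2_eq_square)
    finally show ?thesis .
  qed
  have Imu: "I_V2 \<mu> = 1 - 3 * (1/d) + 2 * (1 / d\<^sup>2)"
    unfolding I_V2_formula[OF assms(2)] p2mu p3mu ..
  have K: "3 / d - 2 / d\<^sup>2 \<le> 3 * (\<Sum>i\<in>UNIV. \<Sum>j\<in>UNIV. Bm \<nu> i j * Bm \<nu> i j)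
     - 2 * (\<Sum>i\<in>UNIV. \<Sum>j\<in>UNIV. (\<Sum>k\<in>UNIV. Bm \<nu> i k * Bm \<nu> k j) * Bm \<nu> i j)"
    unfolding d_def using meas_facts[OF nu] assms(1) by (intro key_ineq) auto
  show "I_V2 \<nu> \<le> I_V2 \<mu>"
    unfolding Imu I_V2_formula[OF nu] using K by simp
qed

end
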